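(* Let $\Sigma$ be a finite alphabet with $|\Sigma|\ge2$ and let $\delta$ be any Hamming compatible metric on $\Sigma^*$ (no uniformity assumed). Let $u,w\in\Sigma^*$ with $l(u)\ge l(w)$, and let $v$ be a Hamming opposite of $u$ satisfying $H(\underline{u},\underline{w})+H(\underline{v},\underline{w})=l(w)$. Then $\delta(u,w)\ge d_2(u,w)$ or $\delta(v,w)\ge d_2(v,w)$. Consequently, for every $w\in\Sigma^*$ there is a sequence of words $u_n\in\Sigma_n$ ($n\ge l(w)$) with $\delta(u_n,w)\ge d_2(u_n,w)$; in particular $\delta(u_n,w)\to\infty$ as $n\to\infty$.
   Context: $\Sigma_n$ is the set of words of length $n$ over $\Sigma$, $\Sigma^*$ the set of all finite words, $l(u)$ the length of $u$, $H$ the Hamming distance between equal-length words. For arbitrary $x,y$, if $l(x)\ge l(y)$, $\underline{x}$ is the prefix of $x$ of length $l(y)$ and $\underline{y}=y$ (symmetrically otherwise). Metrics are integer-valued; a metric $\delta$ on $\Sigma^*$ is Hamming compatible if $\delta(x,y)=H(x,y)$ whenever $l(x)=l(y)$. $d_2(x,y)=H(\underline{x},\underline{y})+\lceil |l(x)-l(y)|/2\rceil$. Two words of the same length $n$ are Hamming opposites if their Hamming distance is $n$. *)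

theory Defs
  imports Complex_Main
begin

text \<open>Words over an alphabet 'a are lists. Hamming distance for equal-length words
(only meaningful when the lengths agree).\<close>
definition hamming :: "'a list \<Rightarrow> 'a list \<Rightarrow> nat" where
  "hamming x y = card {i. i < length x \<and> x ! i \<noteq> y ! i}"

text \<open>Integer-valued (hence natural-valued, being nonnegative) metric on words.\<close>
definition is_metric :: "('a list \<Rightarrow> 'a list \<Rightarrow> nat) \<Rightarrow> bool" where
  "is_metric \<delta> \<longleftrightarrow>
     (\<forall>x y. \<delta> x y = 0 \<longleftrightarrow> x = y) \<and>
     (\<forall>x y. \<delta> x y = \<delta> y x) \<and>
     (\<forall>x y z. \<delta> x z \<le> \<delta> x y + \<delta> y z)"

definition hamming_compatible :: "('a list \<Rightarrow> 'a list \<Rightarrow> nat) \<Rightarrow> bool" where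
  "hamming_compatible \<delta> \<longleftrightarrow>
     (\<forall>x y. length x = length y \<longrightarrow> \<delta> x y = hamming x y)"

definition under :: "'a list \<Rightarrow> 'a list \<Rightarrow> 'a list" where
  "under x y = take (min (length x) (length y)) x"

definition d2 :: "'a list \<Rightarrow> 'a list \<Rightarrow> nat" where
  "d2 x y = hamming (under x y) (under y x)
     + nat \<lceil>\<bar>real (length x) - real (length y)\<bar> / 2\<rceil>"

definition hamming_opposite :: "'a list \<Rightarrow> 'a list \<Rightarrow> bool" where
  "hamming_opposite u v \<longleftrightarrow> length u = length v \<and> hamming u v = length u"

end

theory Submission
  imports Defs
begin

lemma ceil_bound:
  fixes k :: nat
  shows "2 * nat \<lceil>real k / 2\<rceil> \<le> k + 1" and "real k / 2 \<le> real (nat \<lceil>real k / 2\<rceil>)"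
proof -
  have "real_of_int \<lceil>real k / 2\<rceil> < real k / 2 + 1" by linarith
  moreover have "\<lceil>real k / 2\<rceil> \<ge> 0" by simp
  ultimately have "real (2 * nat \<lceil>real k / 2\<rceil>) < real k + 2" by simp
  then show "2 * nat \<lceil>real k / 2\<rceil> \<le> k + 1" by linarith
  show "real k / 2 \<le> real (nat \<lceil>real k / 2\<rceil>)"
  proof -
    have "\<lceil>real k / 2\<rceil> \<ge> 0" by simp
    then have "real (nat \<lceil>real k / 2\<rceil>) = real_of_int \<lceil>real k / 2\<rceil>" by simp
    then show ?thesis using le_of_int_ceiling[of "real k / 2"] by simp
  qed
qed

lemma part1:
  assumes met: "is_metric \<delta>" and hc: "hamming_compatible \<delta>"
    and len: "length u \<ge> length w" and opp: "hamming_opposite u v"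
    and sum: "hamming (under u w) (under w u) + hamming (under v w) (under w v) = length w"
  shows "\<delta> u w \<ge> d2 u w \<or> \<delta> v w \<ge> d2 v w"
proof (rule ccontr)
  assume "\<not> ?thesis"
  then have a: "\<delta> u w < d2 u w" "\<delta> v w < d2 v w" by auto
  define k where "k = length u - length w"
  define c where "c = nat \<lceil>real k / 2\<rceil>"
  have lv: "length v = length u" and huv: "hamming u v = length u" using opp unfolding hamming_opposite_def by auto
  have ab: "\<bar>real (length u) - real (length w)\<bar> = real k" using len k_def by simp
  have du: "d2 u w = hamming (under u w) (under w u) + c" unfolding d2_def c_def using ab by simp
  have dv: "d2 v w = hamming (under v w) (under w v) + c" unfolding d2_def c_def using ab lv by simp
  have c2: "2 * c \<le> k + 1" unfolding c_def by (rule ceil_bound(1))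
  have "\<delta> u v \<le> \<delta> u w + \<delta> w v" using met unfolding is_metric_def by blast
  moreover have "\<delta> w v = \<delta> v w" using met unfolding is_metric_def by blast
  moreover have "\<delta> u v = length u" using hc lv huv unfolding hamming_compatible_def by simp
  ultimately show False using a du dv c2 sum len k_def by linarith
qed

lemma hamming_self: "hamming x x = 0"
  unfolding hamming_def by simp

lemma hamming_all:
  assumes "\<forall>i<length x. x ! i \<noteq> y ! i"
  shows "hamming x y = length x"
proof -
  have "{i. i < length x \<and> x ! i \<noteq> y ! i} = {..<length x}" using assms by auto
  then show ?thesis unfolding hamming_def by simp
qed

lemma d2_lower:
  assumes "length x \<ge> length w"
  shows "real (length x - length w) / 2 \<le> real (d2 x w)"
proof -
  have ab: "\<bar>real (length x) - real (length w)\<bar> = real (length x - length w)" using assms by simp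
  have "nat \<lceil>real (length x - length w) / 2\<rceil> \<le> d2 x w" unfolding d2_def ab by simp
  then have "real (nat \<lceil>real (length x - length w) / 2\<rceil>) \<le> real (d2 x w)" by (simp only: of_nat_le_iff)
  then show ?thesis using ceil_bound(2)[of "length x - length w"] by linarith
qed

theorem mainTheorem9:
  fixes \<delta> :: "('a::finite) list \<Rightarrow> 'a list \<Rightarrow> nat"
  assumes "card (UNIV :: 'a set) \<ge> 2"
    and "is_metric \<delta>"
    and "hamming_compatible \<delta>"
  shows "(\<forall>u v w. length u \<ge> length w \<longrightarrow> hamming_opposite u v \<longrightarrow>
            hamming (under u w) (under w u) + hamming (under v w) (under w v) = length w \<longrightarrow>
            \<delta> u w \<ge> d2 u w \<or> \<delta> v w \<ge> d2 v w)
       \<and> (\<forall>w. \<exists>us :: nat \<Rightarrow> 'a list.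
            (\<forall>n \<ge> length w. length (us n) = n \<and> \<delta> (us n) w \<ge> d2 (us n) w)
            \<and> filterlim (\<lambda>n. \<delta> (us n) w) at_top sequentially)"
proof (intro conjI allI impI)
  fix u v w :: "'a list"
  assume "length u \<ge> length w" "hamming_opposite u v"
    "hamming (under u w) (under w u) + hamming (under v w) (under w v) = length w"
  then show "\<delta> u w \<ge> d2 u w \<or> \<delta> v w \<ge> d2 v w" using part1 assms(2,3) by blast
next
  fix w :: "'a list"
  define opp :: "'a \<Rightarrow> 'a" where "opp x = (SOME y. y \<noteq> x)" for x
  have oppne: "opp x \<noteq> x" for x
  proof -
    have "\<exists>y::'a. y \<noteq> x"
    proof (rule ccontr)
      assume "\<not> (\<exists>y::'a. y \<noteq> x)"
      then have h: "(UNIV :: 'a set) = {x}" by auto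
      have "card (UNIV :: 'a set) = 1" by (subst h) simp
      then show False using assms(1) by linarith
    qed
    then show ?thesis unfolding opp_def by (rule someI_ex)
  qed
  obtain a :: 'a where True by simp
  define m where "m = length w"
  define U where "U n = w @ replicate (n - m) a" for n
  define V where "V n = map opp w @ replicate (n - m) (opp a)" for n
  define us where "us n = (if \<delta> (U n) w \<ge> d2 (U n) w then U n else V n)" for n
  have key: "length (us n) = n \<and> \<delta> (us n) w \<ge> d2 (us n) w" if "n \<ge> m" for n
  proof -
    have lU: "length (U n) = n" and lV: "length (V n) = n" using that unfolding U_def V_def m_def by auto
    have "\<forall>i<length (U n). U n ! i \<noteq> V n ! i"
      unfolding U_def V_def by (auto simp: nth_append oppne[symmetric] m_def)
    then have "hamming (U n) (V n) = n" using hamming_all lU by metis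
    then have op: "hamming_opposite (U n) (V n)" unfolding hamming_opposite_def using lU lV by simp
    have u1: "under (U n) w = w" "under w (U n) = w" "under (V n) w = map opp w" "under w (V n) = w"
      unfolding under_def U_def V_def m_def using that m_def by auto
    have "hamming (map opp w) w = length w"
      using hamming_all[of "map opp w" w] oppne by simp
    then have "hamming (under (U n) w) (under w (U n)) + hamming (under (V n) w) (under w (V n)) = length w"
      using u1 hamming_self by simp
    then have "\<delta> (U n) w \<ge> d2 (U n) w \<or> \<delta> (V n) w \<ge> d2 (V n) w"
      using part1[OF assms(2,3) _ op] lU that m_def by simp
    then show ?thesis using lU lV unfolding us_def by auto
  qed
  show "\<exists>us :: nat \<Rightarrow> 'a list.
            (\<forall>n \<ge> length w. length (us n) = n \<and> \<delta> (us n) w \<ge> d2 (us n) w)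
            \<and> filterlim (\<lambda>n. \<delta> (us n) w) at_top sequentially"
  proof (rule exI[of _ us], rule conjI)
    show "\<forall>n \<ge> length w. length (us n) = n \<and> \<delta> (us n) w \<ge> d2 (us n) w"
      using key m_def by simp
  next
    show "filterlim (\<lambda>n. \<delta> (us n) w) at_top sequentially"
    proof (rule filterlim_at_top_mono)
      show "filterlim (\<lambda>n::nat. (n - m) div 2) at_top sequentially"
        unfolding filterlim_at_top
      proof
        fix Z :: nat
        show "\<forall>\<^sub>F n in sequentially. Z \<le> (n - m) div 2"
          by (rule eventually_sequentiallyI[of "m + 2 * Z"]) linarith
      qed
      show "\<forall>\<^sub>F n in sequentially. (n - m) div 2 \<le> \<delta> (us n) w"
      proof (rule eventually_sequentiallyI[of m])
        fix n assume n: "n \<ge> m"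
        have "real (length (us n) - length w) / 2 \<le> real (d2 (us n) w)"
          using d2_lower[of w "us n"] key[OF n] n m_def by simp
        then have "real (n - m) / 2 \<le> real (\<delta> (us n) w)" using key[OF n] m_def by simp
        then show "(n - m) div 2 \<le> \<delta> (us n) w" by linarith
      qed
    qed
  qed
qed

end
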